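(* Consider the following bidding algorithm in repeated non-credible second-price auctions with known $G$, unknown $\alpha_0\in[0,1]$ and bandit feedback: bid $b_1=1$; for $t=2,\dots,T$, after observing $v_t$, compute $\widetilde{\alpha}_t=\arg\min_{\alpha\in[0,1]}\left|\sum_{s=1}^{t-1}\big(r_s-r(v_s,b_s,\alpha)\big)\right|$ and bid $b_t=\arg\max_b r(v_t,b,\widetilde{\alpha}_t)$. Then for every $\delta\in(0,1)$, with probability at least $1-\delta$, for all $t\in\{2,\dots,T\}$, $$|\widetilde{\alpha}_t-\alpha_0|\le w_t,\qquad w_t=\frac{2\sqrt{2(t-1)\log(2T/\delta)}}{\sum_{s=1}^{t-1}\int_0^{b_s}G(y)\,dy}.$$
   Context: Setting: rounds $t=1,\dots,T$; values $v_t\in[0,1]$ i.i.d. from a distribution $F$; highest competing bids $d_t\in\mathbb{R}_+$ i.i.d. from distribution $G$ (CDF $G$), independent of the values. The bidder bids $b_t\ge0$; $x_t=\mathbb{I}\{b_t\ge d_t\}$; if she wins she pays $p_t=\alpha_0d_t+(1-\alpha_0)b_t$; cost $c_t=x_tp_t$, observed reward $r_t=x_tv_t-c_t$. Bandit feedback: before round $t$ the bidder knows $(v_s,x_s,c_s)_{s=1}^{t-1}$. Here $r(v,b,\alpha)=(v-b)G(b)+\alpha\int_0^bG(y)\,dy$. *)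

theory Defs
  imports "HOL-Probability.Probability"
begin

definition gen_sigma :: "'a set \<Rightarrow> ('a \<Rightarrow> real) set \<Rightarrow> 'a measure" where
  "gen_sigma \<Omega> Xs = sigma \<Omega> {X -` B \<inter> \<Omega> | X B. X \<in> Xs \<and> B \<in> sets borel}"

definition win :: "real \<Rightarrow> real \<Rightarrow> real" where
  "win b d = (if b \<ge> d then 1 else 0)"

definition cost :: "real \<Rightarrow> real \<Rightarrow> real \<Rightarrow> real" where
  "cost \<alpha>0 b d = win b d * (\<alpha>0 * d + (1 - \<alpha>0) * b)"

definition reward :: "real \<Rightarrow> real \<Rightarrow> real \<Rightarrow> real \<Rightarrow> real" where
  "reward \<alpha>0 v b d = win b d * v - cost \<alpha>0 b d"

definition rfun :: "(real \<Rightarrow> real) \<Rightarrow> real \<Rightarrow> real \<Rightarrow> real \<Rightarrow> real" where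
  "rfun G v b \<alpha> = (v - b) * G b + \<alpha> * integral {0..b} G"

end

theory Submission
  imports Defs
begin


lemma layer_nn:
  fixes N :: "real measure" and G :: "real \<Rightarrow> real" and \<beta> :: real
  assumes N: "prob_space N" "sets N = sets borel"
    and G: "\<And>y. G y = measure N {..y}" and b: "0 \<le> \<beta>"
  shows "(\<integral>\<^sup>+ y. ennreal (indicator {0..\<beta>} y * y) \<partial>N) = ennreal (\<beta> * G \<beta> - integral {0..\<beta>} G)"
proof -
  interpret N: prob_space N by fact
  have [measurable_cong]: "sets N = sets borel" by fact
  have Gmono: "mono G" unfolding mono_def G
    by (intro allI impI N.finite_measure_mono) (auto simp: N)
  have Gint: "G integrable_on {0..\<beta>}"
    by (rule integrable_on_mono_on) (meson Gmono mono_imp_mono_on)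
  have h: "ennreal (indicator {0..\<beta>} y * y) = (\<integral>\<^sup>+ x. indicator {0..\<beta>} x * indicator {x<..\<beta>} y \<partial>lborel)" for y
  proof (cases "0 \<le> y \<and> y \<le> \<beta>")
    case True
    have "(\<integral>\<^sup>+ x. indicator {0..\<beta>} x * indicator {x<..\<beta>} y \<partial>lborel) = (\<integral>\<^sup>+ x. indicator {0..<y} x \<partial>lborel)"
      using True by (intro nn_integral_cong) (auto simp: indicator_def)
    also have "\<dots> = ennreal y" using True by simp
    finally show ?thesis using True by simp
  next
    case False
    have "(\<lambda>x. indicator {0..\<beta>} x * indicator {x<..\<beta>} y :: ennreal) = (\<lambda>x. 0)"
      using False by (auto simp: fun_eq_iff indicator_def)
    then show ?thesis using False by (simp add: indicator_def)
  qed
  have "(\<integral>\<^sup>+ y. ennreal (indicator {0..\<beta>} y * y) \<partial>N) =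
        (\<integral>\<^sup>+ y. (\<integral>\<^sup>+ x. indicator {0..\<beta>} x * indicator {x<..\<beta>} y \<partial>lborel) \<partial>N)"
    by (simp add: h)
  also have "\<dots> = (\<integral>\<^sup>+ x. (\<integral>\<^sup>+ y. indicator {0..\<beta>} x * indicator {x<..\<beta>} y \<partial>N) \<partial>lborel)"
  proof -
    interpret P: pair_sigma_finite lborel N
      by (simp add: N.sigma_finite_measure_axioms lborel.sigma_finite_measure_axioms pair_sigma_finite.intro)
    have [measurable]: "Measurable.pred (borel \<Otimes>\<^sub>M borel) (\<lambda>x::real\<times>real. snd x \<in> {fst x<..\<beta>})"
      unfolding greaterThanAtMost_iff by measurable
    show ?thesis
      by (rule P.Fubini') measurable
  qed
  also have "\<dots> = (\<integral>\<^sup>+ x. ennreal (indicator {0..\<beta>} x * (G \<beta> - G x)) \<partial>lborel)"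
  proof (intro nn_integral_cong)
    fix x :: real
    show "(\<integral>\<^sup>+ y. indicator {0..\<beta>} x * indicator {x<..\<beta>} y \<partial>N) = ennreal (indicator {0..\<beta>} x * (G \<beta> - G x))"
    proof (cases "x \<in> {0..\<beta>}")
      case True
      have "{x<..\<beta>} = {..\<beta>} - {..x}" by auto
      then have "emeasure N {x<..\<beta>} = ennreal (G \<beta> - G x)"
        using True by (simp add: N.emeasure_eq_measure G N N.finite_measure_Diff)
      then show ?thesis using True by (simp add: N)
    qed simp
  qed
  also have "\<dots> = ennreal (integral {0..\<beta>} (\<lambda>x. G \<beta> - G x))"
  proof (rule nn_integral_has_integral_lebesgue)
    show "\<And>x. x \<in> {0..\<beta>} \<Longrightarrow> 0 \<le> G \<beta> - G x" using Gmono by (auto simp: mono_def)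
    show "((\<lambda>x. G \<beta> - G x) has_integral integral {0..\<beta>} (\<lambda>x. G \<beta> - G x)) {0..\<beta>}"
      using Gint by (intro integrable_integral integrable_diff) auto
  qed
  also have "integral {0..\<beta>} (\<lambda>x. G \<beta> - G x) = \<beta> * G \<beta> - integral {0..\<beta>} G"
    using Gint b by (subst integral_diff) auto
  finally show ?thesis .
qed

lemma layer_int:
  fixes N :: "real measure" and G :: "real \<Rightarrow> real" and \<beta> :: real
  assumes N: "prob_space N" "sets N = sets borel"
    and G: "\<And>y. G y = measure N {..y}" and b: "0 \<le> \<beta>"
  shows "(\<integral> y. indicator {0..\<beta>} y * y \<partial>N) = \<beta> * G \<beta> - integral {0..\<beta>} G"
proof -
  interpret N: prob_space N by fact
  have [measurable_cong]: "sets N = sets borel" by fact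
  have Gmono: "mono G" unfolding mono_def G
    by (intro allI impI N.finite_measure_mono) (auto simp: N)
  have Gint: "G integrable_on {0..\<beta>}"
    by (rule integrable_on_mono_on) (meson Gmono mono_imp_mono_on)
  have "0 \<le> integral {0..\<beta>} (\<lambda>x. G \<beta> - G x)"
    using Gint Gmono by (intro integral_nonneg integrable_diff) (auto simp: mono_def)
  also have "integral {0..\<beta>} (\<lambda>x. G \<beta> - G x) = \<beta> * G \<beta> - integral {0..\<beta>} G"
    using Gint b by (subst integral_diff) auto
  finally have nn: "0 \<le> \<beta> * G \<beta> - integral {0..\<beta>} G" .
  have "(\<integral> y. indicator {0..\<beta>} y * y \<partial>N) = enn2real (\<integral>\<^sup>+ y. ennreal (indicator {0..\<beta>} y * y) \<partial>N)"
    by (rule integral_eq_nn_integral) (auto simp: indicator_def)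
  also have "\<dots> = \<beta> * G \<beta> - integral {0..\<beta>} G"
    using layer_nn[OF N G b] nn by simp
  finally show ?thesis .
qed

lemma k_mean0:
  fixes N :: "real measure" and G :: "real \<Rightarrow> real"
  assumes N: "prob_space N" "sets N = sets borel" and pos: "AE y in N. 0 \<le> y"
    and G: "\<And>y. G y = measure N {..y}"
    and v: "v \<in> {0..1}" and b: "\<beta> \<in> {0..1}" and a: "\<alpha>0 \<in> {0..1}"
  shows "(\<integral> y. reward \<alpha>0 v \<beta> y - rfun G v \<beta> \<alpha>0 \<partial>N) = 0"
proof -
  interpret N: prob_space N by fact
  have [measurable_cong]: "sets N = sets borel" by fact
  define C where "C = rfun G v \<beta> \<alpha>0"
  have "(\<integral> y. reward \<alpha>0 v \<beta> y - rfun G v \<beta> \<alpha>0 \<partial>N) =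
        (\<integral> y. indicator {..\<beta>} y * (v - (1 - \<alpha>0) * \<beta>) - \<alpha>0 * (indicator {0..\<beta>} y * y) - C \<partial>N)"
    using pos by (intro integral_cong_AE) (auto simp: reward_def cost_def win_def C_def indicator_def algebra_simps)
  also have "\<dots> = measure N {..\<beta>} * (v - (1 - \<alpha>0) * \<beta>) - \<alpha>0 * (\<integral> y. indicator {0..\<beta>} y * y \<partial>N) - C"
  proof -
    have i1: "integrable N (\<lambda>y. indicator {0..\<beta>} y * y :: real)"
      by (rule N.integrable_const_bound[where B=\<beta>]) (use b in \<open>auto simp: indicator_def\<close>)
    have i2: "integrable N (\<lambda>y. indicator {..\<beta>} y * (v - (1 - \<alpha>0) * \<beta>) :: real)"
      by (rule N.integrable_const_bound[where B="\<bar>v - (1 - \<alpha>0) * \<beta>\<bar>"]) (auto simp: indicator_def)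
    show ?thesis using i1 i2
      by (simp add: N.prob_space N.emeasure_eq_measure)
  qed
  also have "\<dots> = 0"
  proof -
    have L: "(\<integral> y. indicator {0..\<beta>} y * y \<partial>N) = \<beta> * G \<beta> - integral {0..\<beta>} G"
      using layer_int[OF N G, of \<beta>] b by simp
    show ?thesis unfolding L using G[of \<beta>] by (simp add: C_def rfun_def algebra_simps)
  qed
  finally show ?thesis .
qed

lemma k_hoeff:
  fixes N :: "real measure" and G :: "real \<Rightarrow> real" and l :: real
  assumes N: "prob_space N" "sets N = sets borel" and pos: "AE y in N. 0 \<le> y"
    and G: "\<And>y. G y = measure N {..y}"
    and v: "v \<in> {0..1}" and b: "\<beta> \<in> {0..1}" and a: "\<alpha>0 \<in> {0..1}"
  shows "(\<integral>\<^sup>+ y. ennreal (exp (l * (reward \<alpha>0 v \<beta> y - rfun G v \<beta> \<alpha>0))) \<partial>N) \<le> ennreal (exp (l^2 / 8))"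
proof -
  interpret N: prob_space N by fact
  have [measurable_cong]: "sets N = sets borel" by fact
  define C where "C = rfun G v \<beta> \<alpha>0"
  define f where "f = (\<lambda>y. reward \<alpha>0 v \<beta> y - C)"
  define lo where "lo = min 0 (v - \<beta>) - C"
  define hi where "hi = v - C"
  have fm[measurable]: "f \<in> borel_measurable N"
    unfolding f_def reward_def cost_def win_def by measurable
  have rng: "AE y in N. f y \<in> {lo..hi}"
    using pos
  proof eventually_elim
    case (elim y)
    have "y \<le> \<beta> \<Longrightarrow> \<alpha>0 * y \<le> \<alpha>0 * \<beta>" using a by (intro mult_left_mono) auto
    moreover have "\<alpha>0 * \<beta> \<le> \<beta>" using a b by (intro mult_left_le_one_le) auto
    moreover have "0 \<le> \<alpha>0 * y" using a elim by simp
    ultimately show ?case using v b a elim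
      by (auto simp: f_def lo_def hi_def reward_def cost_def win_def algebra_simps
               intro: mult_left_le_one_le mult_right_le_one_le mult_nonneg_nonneg)
         (smt (verit) mult_nonneg_nonneg)
  qed
  have E0: "N.expectation f = 0"
    using k_mean0[OF N pos G v b a] by (simp add: f_def C_def)
  have wid: "(hi - lo)^2 \<le> 1"
    using v b by (auto simp: lo_def hi_def min_def power_le_one)
  show ?thesis
  proof (cases "l = 0")
    case True
    then show ?thesis by (simp add: N.emeasure_space_1)
  next
    case False
    have "(hi - lo)^2 * l^2 / 8 \<le> 1 * l^2 / 8"
      using wid by (intro divide_right_mono mult_right_mono) auto
    then have ex: "exp (l\<^sup>2 * (hi - lo)\<^sup>2 / 8) \<le> exp (l^2 / 8)" by (simp add: mult.commute)
    show ?thesis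
    proof (cases "l > 0")
      case True
      interpret B: interval_bounded_random_variable N f lo hi
        by unfold_locales (use rng in auto)
      have "(\<integral>\<^sup>+ y. ennreal (exp (l * f y)) \<partial>N) \<le> ennreal (exp (l\<^sup>2 * (hi - lo)\<^sup>2 / 8))"
        by (rule B.Hoeffdings_lemma_nn_integral_0[OF True E0])
      also have "\<dots> \<le> ennreal (exp (l^2 / 8))" using ex by simp
      finally show ?thesis by (simp add: f_def C_def)
    next
      case nl: False
      interpret B: interval_bounded_random_variable N "\<lambda>y. - f y" "- hi" "- lo"
        by unfold_locales (use rng in auto)
      have E0': "N.expectation (\<lambda>y. - f y) = 0" using E0 by simp
      have "(\<integral>\<^sup>+ y. ennreal (exp ((- l) * (- f y))) \<partial>N) \<le> ennreal (exp ((-l)\<^sup>2 * (- lo - - hi)\<^sup>2 / 8))"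
        by (rule B.Hoeffdings_lemma_nn_integral_0[OF _ E0']) (use False nl in auto)
      also have "\<dots> \<le> ennreal (exp (l^2 / 8))" using ex by (simp add: power2_commute)
      finally show ?thesis by (simp add: f_def C_def algebra_simps)
    qed
  qed
qed

lemma gen_sigma_meas:
  fixes Xs :: "('a \<Rightarrow> real) set"
  assumes X: "\<And>X. X \<in> Xs \<Longrightarrow> X \<in> borel_measurable N" and sp: "space N = \<Omega>"
    and f: "f \<in> borel_measurable (gen_sigma \<Omega> Xs)"
  shows "f \<in> borel_measurable N"
proof -
  let ?A = "{X -` B \<inter> \<Omega> | X B. X \<in> Xs \<and> B \<in> sets borel}"
  have A: "?A \<subseteq> Pow \<Omega>" by auto
  have "?A \<subseteq> sets N"
    using X sp by (auto intro: measurable_sets)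
  then have "sigma_sets \<Omega> ?A \<subseteq> sets N"
    using sets.sigma_sets_subset[of ?A N] sp by simp
  then have "sets (gen_sigma \<Omega> Xs) \<subseteq> sets N"
    unfolding gen_sigma_def using A by simp
  moreover have "space (gen_sigma \<Omega> Xs) = space N"
    unfolding gen_sigma_def using A sp by simp
  ultimately show ?thesis
    using f measurable_mono[of borel borel "gen_sigma \<Omega> Xs" N] by auto
qed

lemma Ifun_mono:
  fixes G :: "real \<Rightarrow> real"
  assumes m: "mono G" and nn: "\<And>y. 0 \<le> G y"
  shows "mono (\<lambda>x. integral {0..x} G)"
proof (rule monoI)
  fix x y :: real assume xy: "x \<le> y"
  have int: "G integrable_on {a..b}" for a b
    by (rule integrable_on_mono_on) (meson m mono_imp_mono_on)
  show "integral {0..x} G \<le> integral {0..y} G"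
  proof (cases "x < 0")
    case True
    then have "integral {0..x} G = 0" by simp
    moreover have "0 \<le> integral {0..y} G" using int nn by (intro integral_nonneg) auto
    ultimately show ?thesis by simp
  next
    case False
    have "integral {0..x} G + integral {x..y} G = integral {0..y} G"
      using False xy int by (intro Henstock_Kurzweil_Integration.integral_combine) auto
    moreover have "0 \<le> integral {x..y} G" using int nn by (intro integral_nonneg) auto
    ultimately show ?thesis by simp
  qed
qed

theorem lemma5:
  fixes M :: "'a measure"
    and v d b atil :: "nat \<Rightarrow> 'a \<Rightarrow> real"
    and G :: "real \<Rightarrow> real"
    and \<alpha>0 \<delta> :: real and T :: nat
  assumes "prob_space M"
    and alpha0: "\<alpha>0 \<in> {0..1}"
    and delta: "0 < \<delta>" "\<delta> < 1"
    and v_meas: "\<And>t. t \<in> {1..T} \<Longrightarrow> v t \<in> borel_measurable M"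
    and d_meas: "\<And>t. t \<in> {1..T} \<Longrightarrow> d t \<in> borel_measurable M"
    and indep: "prob_space.indep_vars M (\<lambda>_. borel)
                  (\<lambda>i. case i of Inl t \<Rightarrow> v t | Inr t \<Rightarrow> d t)
                  (Inl ` {1..T} \<union> Inr ` {1..T})"
    and v_ident: "\<And>t. t \<in> {1..T} \<Longrightarrow> distr M borel (v t) = distr M borel (v 1)"
    and v_range: "\<And>t \<omega>. t \<in> {1..T} \<Longrightarrow> \<omega> \<in> space M \<Longrightarrow> v t \<omega> \<in> {0..1}"
    and d_range: "\<And>t \<omega>. t \<in> {1..T} \<Longrightarrow> \<omega> \<in> space M \<Longrightarrow> d t \<omega> \<ge> 0"
    and G_cdf: "\<And>t y. t \<in> {1..T} \<Longrightarrow> measure M {\<omega> \<in> space M. d t \<omega> \<le> y} = G y"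
    \<comment> \<open>the algorithm: first bid\<close>
    and b1: "\<And>\<omega>. \<omega> \<in> space M \<Longrightarrow> b 1 \<omega> = 1"
    \<comment> \<open>alpha-tilde_t is an argmin over [0,1]\<close>
    and atil_argmin: "\<And>t \<omega>. t \<in> {2..T} \<Longrightarrow> \<omega> \<in> space M \<Longrightarrow>
        atil t \<omega> \<in> {0..1} \<and>
        (\<forall>\<alpha>\<in>{0..1}.
          \<bar>\<Sum>s = 1..<t. reward \<alpha>0 (v s \<omega>) (b s \<omega>) (d s \<omega>) - rfun G (v s \<omega>) (b s \<omega>) (atil t \<omega>)\<bar>
          \<le> \<bar>\<Sum>s = 1..<t. reward \<alpha>0 (v s \<omega>) (b s \<omega>) (d s \<omega>) - rfun G (v s \<omega>) (b s \<omega>) \<alpha>\<bar>)"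
    \<comment> \<open>b_t is an argmax of r(v_t, . , alpha-tilde_t) over all bids b >= 0 (ties broken inside [0,1])\<close>
    and b_argmax: "\<And>t \<omega>. t \<in> {2..T} \<Longrightarrow> \<omega> \<in> space M \<Longrightarrow>
        b t \<omega> \<in> {0..1} \<and>
        (\<forall>\<beta>\<ge>0. rfun G (v t \<omega>) \<beta> (atil t \<omega>) \<le> rfun G (v t \<omega>) (b t \<omega>) (atil t \<omega>))"
    \<comment> \<open>bandit feedback: alpha-tilde_t uses only (v_s, x_s, c_s)_{s<t}; b_t additionally v_t\<close>
    and atil_adapted: "\<And>t. t \<in> {2..T} \<Longrightarrow> atil t \<in> borel_measurable
        (gen_sigma (space M) (\<Union>s\<in>{1..<t}. {v s, (\<lambda>\<omega>. win (b s \<omega>) (d s \<omega>)),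
                                               (\<lambda>\<omega>. cost \<alpha>0 (b s \<omega>) (d s \<omega>))}))"
    and b_adapted: "\<And>t. t \<in> {2..T} \<Longrightarrow> b t \<in> borel_measurable
        (gen_sigma (space M) (insert (v t) (\<Union>s\<in>{1..<t}. {v s, (\<lambda>\<omega>. win (b s \<omega>) (d s \<omega>)),
                                               (\<lambda>\<omega>. cost \<alpha>0 (b s \<omega>) (d s \<omega>))})))"
  shows "measure M {\<omega> \<in> space M. \<forall>t\<in>{2..T}.
            (\<Sum>s = 1..<t. integral {0..b s \<omega>} G) > 0 \<longrightarrow>
            \<bar>atil t \<omega> - \<alpha>0\<bar> \<le> 2 * sqrt (2 * real (t - 1) * ln (2 * real T / \<delta>))
                                     / (\<Sum>s = 1..<t. integral {0..b s \<omega>} G)} \<ge> 1 - \<delta>"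
proof -
  interpret P: prob_space M by fact
  show ?thesis
  proof (cases "T \<le> 1")
    case True
    then have "{\<omega> \<in> space M. \<forall>t\<in>{2..T}. (\<Sum>s = 1..<t. integral {0..b s \<omega>} G) > 0 \<longrightarrow>
            \<bar>atil t \<omega> - \<alpha>0\<bar> \<le> 2 * sqrt (2 * real (t - 1) * ln (2 * real T / \<delta>))
                                     / (\<Sum>s = 1..<t. integral {0..b s \<omega>} G)} = space M" by auto
    then show ?thesis using delta by (simp add: P.prob_space)
  next
  case False
  then have T2: "2 \<le> T" by simp
  define X where "X = (\<lambda>i. case i of Inl t \<Rightarrow> v t | Inr t \<Rightarrow> d t)"
  define E where "E = (\<lambda>i. {X i -` B \<inter> space M | B. B \<in> sets borel})"
  define JJ where "JJ = (\<lambda>n::nat. Inl ` {1..n} \<union> Inr ` {1..<n} :: (nat + nat) set)"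
  define FM where "FM = (\<lambda>n. sigma (space M) (\<Union>i\<in>JJ n. E i))"
  have genpow: "(\<Union>i\<in>JJ n. E i) \<subseteq> Pow (space M)" for n unfolding E_def by auto
  have spFM: "space (FM n) = space M" for n unfolding FM_def using genpow by simp
  have setsFM: "sets (FM n) = sigma_sets (space M) (\<Union>i\<in>JJ n. E i)" for n
    unfolding FM_def using genpow by simp
  have FM_mono: "sets (FM m) \<subseteq> sets (FM n)" if "m \<le> n" for m n
    unfolding setsFM using that by (intro sigma_sets_subseteq) (auto simp: JJ_def)
  have FM_M: "sets (FM n) \<subseteq> sets M" if "n \<le> T" for n
    unfolding setsFM
    by (rule sets.sigma_sets_subset)
       (use that in \<open>auto simp: E_def JJ_def X_def intro!: measurable_sets v_meas d_meas\<close>)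
  have meas_up: "f \<in> borel_measurable (FM n)" if "f \<in> borel_measurable (FM m)" "m \<le> n" for f :: "'a \<Rightarrow> real" and m n
    using measurable_mono[of borel borel "FM m" "FM n"] FM_mono[OF that(2)] spFM that(1) by auto
  have meas_M: "f \<in> borel_measurable M" if "f \<in> borel_measurable (FM n)" "n \<le> T" for f :: "'a \<Rightarrow> real" and n
    using measurable_mono[of borel borel "FM n" M] FM_M[OF that(2)] spFM that(1) by auto
  have vF: "v s \<in> borel_measurable (FM n)" if "s \<in> {1..n}" for s n
  proof (rule measurableI)
    fix A :: "real set" assume "A \<in> sets borel"
    then have "v s -` A \<inter> space M \<in> E (Inl s)" unfolding E_def X_def by auto
    moreover have "Inl s \<in> JJ n" using that unfolding JJ_def by auto
    ultimately show "v s -` A \<inter> space (FM n) \<in> sets (FM n)"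
      unfolding setsFM spFM by blast
  qed auto
  have dF: "d s \<in> borel_measurable (FM n)" if "s \<in> {1..<n}" for s n
  proof (rule measurableI)
    fix A :: "real set" assume "A \<in> sets borel"
    then have "d s -` A \<inter> space M \<in> E (Inr s)" unfolding E_def X_def by auto
    moreover have "Inr s \<in> JJ n" using that unfolding JJ_def by auto
    ultimately show "d s -` A \<inter> space (FM n) \<in> sets (FM n)"
      unfolding setsFM spFM by blast
  qed auto
  have bF: "b s \<in> borel_measurable (FM s)" if "s \<in> {1..T}" for s
    using that
  proof (induction s rule: less_induct)
    case (less s)
    show ?case
    proof (cases "s = 1")
      case True
      have "(\<lambda>_. 1::real) \<in> borel_measurable (FM s)" by simp
      then show ?thesis
        using True b1 by (subst measurable_cong[where g="\<lambda>_. 1"]) (auto simp: spFM)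
    next
      case False
      then have s2: "s \<in> {2..T}" using less.prems by auto
      show ?thesis
      proof (rule gen_sigma_meas[OF _ spFM b_adapted[OF s2]])
        fix Y assume "Y \<in> insert (v s) (\<Union>r\<in>{1..<s}. {v r, (\<lambda>\<omega>. win (b r \<omega>) (d r \<omega>)),
                                               (\<lambda>\<omega>. cost \<alpha>0 (b r \<omega>) (d r \<omega>))})"
        then consider "Y = v s" | r where "r \<in> {1..<s}" "Y = v r"
          | r where "r \<in> {1..<s}" "Y = (\<lambda>\<omega>. win (b r \<omega>) (d r \<omega>))"
          | r where "r \<in> {1..<s}" "Y = (\<lambda>\<omega>. cost \<alpha>0 (b r \<omega>) (d r \<omega>))"
          by blast
        then show "Y \<in> borel_measurable (FM s)"
        proof cases
          case 1 then show ?thesis using s2 by (auto intro: vF)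
        next
          case (2 r) then show ?thesis by (auto intro: vF)
        next
          case (3 r)
          have [measurable]: "b r \<in> borel_measurable (FM s)"
            using less.IH[of r] 3 s2 by (auto intro: meas_up)
          have [measurable]: "d r \<in> borel_measurable (FM s)" using 3 by (intro dF)
          show ?thesis unfolding 3 win_def by measurable
        next
          case (4 r)
          have [measurable]: "b r \<in> borel_measurable (FM s)"
            using less.IH[of r] 4 s2 by (auto intro: meas_up)
          have [measurable]: "d r \<in> borel_measurable (FM s)" using 4 by (intro dF)
          show ?thesis unfolding 4 cost_def win_def by measurable
        qed
      qed
    qed
  qed
  have bM: "b s \<in> borel_measurable M" if "s \<in> {1..T}" for s
    using bF[OF that] that by (auto intro: meas_M)
  have vM: "v s \<in> borel_measurable M" if "s \<in> {1..T}" for s using v_meas that .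
  have dM: "d s \<in> borel_measurable M" if "s \<in> {1..T}" for s using d_meas that .
  have b_rng: "b s \<omega> \<in> {0..1}" if "s \<in> {1..T}" "\<omega> \<in> space M" for s \<omega>
    using that b1 b_argmax[of s \<omega>] by (cases "s = 1") auto
  have Gd: "G y = measure M {\<omega> \<in> space M. d 1 \<omega> \<le> y}" for y using G_cdf[of 1 y] T2 by simp
  have Gmono: "mono G" unfolding mono_def Gd
    using d_meas[of 1] T2 by (intro allI impI P.finite_measure_mono) auto
  have Gnn: "0 \<le> G y" for y unfolding Gd by simp
  have Gm[measurable]: "G \<in> borel_measurable borel" by (rule borel_measurable_mono[OF Gmono])
  have Im[measurable]: "(\<lambda>x. integral {0..x} G) \<in> borel_measurable borel"
    by (rule borel_measurable_mono[OF Ifun_mono[OF Gmono Gnn]])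
  have indep_all: "P.indep_sets E (Inl ` {1..T} \<union> Inr ` {1..T})"
    using indep unfolding P.indep_vars_def2 E_def X_def by simp
  have indepF: "P.indep_set (sets (FM n)) (sigma_sets (space M) (E (Inr n)))" if "n \<in> {1..T}" for n
  proof -
    have ind1: "P.indep_sets E (\<Union>j\<in>UNIV. case_bool (JJ n) {Inr n} j)"
      by (rule P.indep_sets_mono_index[OF _ indep_all]) (use that in \<open>auto simp: JJ_def split: bool.split_asm\<close>)
    have stab: "Int_stable (E i)" for i
      unfolding E_def Int_stable_def
      apply auto
      apply (rule_tac x="B \<inter> Ba" in exI)
      apply auto
      done
    have disj: "disjoint_family_on (case_bool (JJ n) {Inr n}) UNIV"
      unfolding disjoint_family_on_def JJ_def by (auto split: bool.split)
    have "P.indep_sets (\<lambda>j. sigma_sets (space M) (\<Union>i\<in>case_bool (JJ n) {Inr n} j. E i)) UNIV"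
      by (rule P.indep_sets_collect_sigma[OF ind1 stab disj])
    then show ?thesis unfolding P.indep_set_def
      by (rule P.indep_sets_mono_sets) (auto simp: setsFM split: bool.split)
  qed
  define Z where "Z = (\<lambda>s \<omega>. reward \<alpha>0 (v s \<omega>) (b s \<omega>) (d s \<omega>) - rfun G (v s \<omega>) (b s \<omega>) \<alpha>0)"
  define S where "S = (\<lambda>n \<omega>. \<Sum>s\<in>{1..<Suc n}. Z s \<omega>)"
  have ZF: "Z s \<in> borel_measurable (FM n)" if "s \<in> {1..<n}" "n \<le> T" for s n
  proof -
    have [measurable]: "b s \<in> borel_measurable (FM n)" using bF[of s] that by (auto intro: meas_up)
    have [measurable]: "v s \<in> borel_measurable (FM n)" using that by (auto intro: vF)
    have [measurable]: "d s \<in> borel_measurable (FM n)" using that by (auto intro: dF)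
    show ?thesis unfolding Z_def reward_def cost_def win_def rfun_def by measurable
  qed
  have ZM: "Z s \<in> borel_measurable M" if "s \<in> {1..T}" for s
  proof -
    have [measurable]: "b s \<in> borel_measurable M" "v s \<in> borel_measurable M" "d s \<in> borel_measurable M"
      using that bM vM dM by auto
    show ?thesis unfolding Z_def reward_def cost_def win_def rfun_def by measurable
  qed
  have SF: "S (n - 1) \<in> borel_measurable (FM n)" if "n \<in> {1..T}" for n
    unfolding S_def using that by (intro borel_measurable_sum ZF) auto
  have SM: "S n \<in> borel_measurable M" if "n \<le> T" for n
    unfolding S_def using that by (intro borel_measurable_sum ZM) auto
  have mgf_step: "(\<integral>\<^sup>+\<omega>. ennreal (exp (l * S n \<omega>)) \<partial>M)
      \<le> ennreal (exp (l^2 / 8)) * (\<integral>\<^sup>+\<omega>. ennreal (exp (l * S (n - 1) \<omega>)) \<partial>M)"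
    if n: "n \<in> {1..T}" for n l
  proof -
    define Y where "Y = (\<lambda>\<omega>. (S (n - 1) \<omega>, v n \<omega>, b n \<omega>))"
    define SY where "SY = (borel \<Otimes>\<^sub>M (borel \<Otimes>\<^sub>M borel) :: (real \<times> real \<times> real) measure)"
    define DY where "DY = distr M SY Y"
    define DD where "DD = distr M borel (d n)"
    have YF: "Y \<in> measurable (FM n) SY"
      unfolding Y_def SY_def using SF[OF n] vF[of n n] bF[of n] n
      by (auto intro!: measurable_Pair)
    have YM: "Y \<in> measurable M SY"
      using measurable_mono[of SY SY "FM n" M] FM_M[of n] n spFM YF by auto
    have dnM[measurable]: "d n \<in> borel_measurable M" using dM n by auto
    have indprob: "\<forall>a\<in>sets (FM n). \<forall>c\<in>sigma_sets (space M) (E (Inr n)). P.prob (a \<inter> c) = P.prob a * P.prob c"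
      using indepF[OF n] unfolding P.indep_sets2_eq by blast
    interpret DD: prob_space DD unfolding DD_def by (rule P.prob_space_distr) simp
    interpret DY: prob_space DY unfolding DY_def by (rule P.prob_space_distr[OF YM])
    have DDsets: "sets DD = sets borel" unfolding DD_def by simp
    have DYsets: "sets DY = sets SY" unfolding DY_def by simp
    have deq: "DY \<Otimes>\<^sub>M DD = distr M (SY \<Otimes>\<^sub>M borel) (\<lambda>x. (Y x, d n x))"
    proof (rule pair_measure_eqI)
      show "sigma_finite_measure DY" by (rule DY.sigma_finite_measure_axioms)
      show "sigma_finite_measure DD" by (rule DD.sigma_finite_measure_axioms)
      show "sets (DY \<Otimes>\<^sub>M DD) = sets (distr M (SY \<Otimes>\<^sub>M borel) (\<lambda>x. (Y x, d n x)))"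
        using sets_pair_measure_cong[OF DYsets DDsets] by simp
      fix A B assume A: "A \<in> sets DY" and B: "B \<in> sets DD"
      have a: "Y -` A \<inter> space M \<in> sets (FM n)"
        using measurable_sets[OF YF, of A] A DYsets spFM by simp
      have c: "d n -` B \<inter> space M \<in> sigma_sets (space M) (E (Inr n))"
        using B DDsets unfolding E_def X_def by (intro sigma_sets.Basic) auto
      have XY: "(\<lambda>x. (Y x, d n x)) \<in> measurable M (SY \<Otimes>\<^sub>M borel)"
        using YM dnM by (rule measurable_Pair)
      have "emeasure (distr M (SY \<Otimes>\<^sub>M borel) (\<lambda>x. (Y x, d n x))) (A \<times> B)
          = emeasure M ((\<lambda>x. (Y x, d n x)) -` (A \<times> B) \<inter> space M)"
        using A B DYsets DDsets by (intro emeasure_distr[OF XY]) auto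
      also have "(\<lambda>x. (Y x, d n x)) -` (A \<times> B) \<inter> space M = (Y -` A \<inter> space M) \<inter> (d n -` B \<inter> space M)"
        by auto
      also have "emeasure M \<dots> = emeasure M (Y -` A \<inter> space M) * emeasure M (d n -` B \<inter> space M)"
        using indprob a c by (simp add: P.emeasure_eq_measure measure_nonneg ennreal_mult)
      also have "\<dots> = emeasure DY A * emeasure DD B"
        using A B DYsets DDsets unfolding DY_def DD_def by (simp add: emeasure_distr YM)
      finally show "emeasure DY A * emeasure DD B = emeasure (distr M (SY \<Otimes>\<^sub>M borel) (\<lambda>x. (Y x, d n x))) (A \<times> B)" by simp
    qed
    define g where "g = (\<lambda>(p::real\<times>real\<times>real, y::real). ennreal (exp (l * fst p) *
        exp (l * (reward \<alpha>0 (fst (snd p)) (snd (snd p)) y - rfun G (fst (snd p)) (snd (snd p)) \<alpha>0))))"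
    have gm: "g \<in> borel_measurable (SY \<Otimes>\<^sub>M borel)"
      unfolding g_def SY_def reward_def cost_def win_def rfun_def by measurable
    have gm': "g \<in> borel_measurable (DY \<Otimes>\<^sub>M DD)"
      using gm by (subst measurable_cong_sets[OF sets_pair_measure_cong[OF DYsets DDsets] refl]) 
    have DDpos: "AE y in DD. 0 \<le> y"
      unfolding DD_def using d_range n by (subst AE_distr_iff) auto
    have DDG: "G y = measure DD {..y}" for y
    proof -
      have "d n -` {..y} \<inter> space M = {\<omega> \<in> space M. d n \<omega> \<le> y}" by auto
      then show ?thesis unfolding DD_def using G_cdf[OF n, of y] by (subst measure_distr) auto
    qed
    have Sn: "S n \<omega> = S (n - 1) \<omega> + Z n \<omega>" for \<omega>
    proof -
      obtain m where m: "n = Suc m" using n by (cases n) auto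
      show ?thesis unfolding S_def m by (simp add: sum.atLeastLessThan_Suc)
    qed
    have "(\<integral>\<^sup>+\<omega>. ennreal (exp (l * S n \<omega>)) \<partial>M) = (\<integral>\<^sup>+\<omega>. g (Y \<omega>, d n \<omega>) \<partial>M)"
      by (intro nn_integral_cong) (simp add: g_def Y_def Sn Z_def distrib_left exp_add)
    also have "\<dots> = (\<integral>\<^sup>+x. g x \<partial>distr M (SY \<Otimes>\<^sub>M borel) (\<lambda>x. (Y x, d n x)))"
      by (rule nn_integral_distr[symmetric]) (use YM gm in auto)
    also have "\<dots> = (\<integral>\<^sup>+x. g x \<partial>(DY \<Otimes>\<^sub>M DD))" by (simp add: deq)
    also have "\<dots> = (\<integral>\<^sup>+p. \<integral>\<^sup>+y. g (p, y) \<partial>DD \<partial>DY)"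
      by (rule DD.nn_integral_fst[symmetric, OF gm'])
    also have "\<dots> \<le> (\<integral>\<^sup>+p. ennreal (exp (l * fst p)) * ennreal (exp (l^2 / 8)) \<partial>DY)"
    proof (rule nn_integral_mono_AE)
      have "AE p in DY. snd p \<in> {0..1} \<times> {0..1}"
        unfolding DY_def
      proof (subst AE_distr_iff[OF YM])
        show "{x \<in> space SY. snd x \<in> {0..1} \<times> {0..1}} \<in> sets SY" unfolding SY_def by measurable
        show "AE x in M. snd (Y x) \<in> {0..1} \<times> {0..1}"
          using v_range[of n] b_rng[of n] n by (intro AE_I2) (auto simp: Y_def)
      qed
      then show "AE p in DY. (\<integral>\<^sup>+y. g (p, y) \<partial>DD) \<le> ennreal (exp (l * fst p)) * ennreal (exp (l^2 / 8))"
      proof eventually_elim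
        case (elim p)
        have "(\<integral>\<^sup>+y. g (p, y) \<partial>DD) = ennreal (exp (l * fst p)) *
            (\<integral>\<^sup>+y. ennreal (exp (l * (reward \<alpha>0 (fst (snd p)) (snd (snd p)) y - rfun G (fst (snd p)) (snd (snd p)) \<alpha>0))) \<partial>DD)"
        proof -
          have [measurable_cong]: "sets DD = sets borel" by (rule DDsets)
          have "(\<lambda>y. exp (l * (reward \<alpha>0 (fst (snd p)) (snd (snd p)) y - rfun G (fst (snd p)) (snd (snd p)) \<alpha>0))) \<in> borel_measurable DD"
            unfolding reward_def cost_def win_def by measurable
          then show ?thesis
            unfolding g_def by (subst nn_integral_cmult[symmetric]) (auto simp: ennreal_mult)
        qed
        also have "\<dots> \<le> ennreal (exp (l * fst p)) * ennreal (exp (l^2 / 8))"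
          using elim alpha0
          by (intro mult_left_mono k_hoeff[OF DD.prob_space_axioms DDsets DDpos DDG]) (auto simp: mem_Times_iff)
        finally show ?case .
      qed
    qed
    also have "\<dots> = ennreal (exp (l^2 / 8)) * (\<integral>\<^sup>+p. ennreal (exp (l * fst p)) \<partial>DY)"
    proof -
      have [measurable_cong]: "sets DY = sets (borel \<Otimes>\<^sub>M (borel \<Otimes>\<^sub>M borel) :: (real \<times> real \<times> real) measure)"
        using DYsets unfolding SY_def .
      have "(\<lambda>p. exp (l * fst p)) \<in> borel_measurable DY" by measurable
      then show ?thesis by (subst nn_integral_multc) (auto simp: mult.commute)
    qed
    also have "(\<integral>\<^sup>+p. ennreal (exp (l * fst p)) \<partial>DY) = (\<integral>\<^sup>+\<omega>. ennreal (exp (l * S (n - 1) \<omega>)) \<partial>M)"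
      unfolding DY_def by (subst nn_integral_distr[OF YM]) (auto simp: Y_def SY_def)
    finally show ?thesis .
  qed
  have mgf: "(\<integral>\<^sup>+\<omega>. ennreal (exp (l * S n \<omega>)) \<partial>M) \<le> ennreal (exp (real n * l^2 / 8))"
    if "n \<le> T" for n l
    using that
  proof (induction n)
    case 0
    have "(\<integral>\<^sup>+\<omega>. ennreal (exp (l * S 0 \<omega>)) \<partial>M) = (\<integral>\<^sup>+\<omega>. 1 \<partial>M)"
      by (simp add: S_def)
    then show ?case by (simp add: P.emeasure_space_1)
  next
    case (Suc m)
    have "(\<integral>\<^sup>+\<omega>. ennreal (exp (l * S (Suc m) \<omega>)) \<partial>M)
        \<le> ennreal (exp (l^2 / 8)) * (\<integral>\<^sup>+\<omega>. ennreal (exp (l * S m \<omega>)) \<partial>M)"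
      using mgf_step[of "Suc m" l] Suc.prems by simp
    also have "\<dots> \<le> ennreal (exp (l^2 / 8)) * ennreal (exp (real m * l^2 / 8))"
      using Suc by (intro mult_left_mono) auto
    also have "\<dots> = ennreal (exp (real (Suc m) * l^2 / 8))"
      by (simp add: ennreal_mult[symmetric] exp_add[symmetric] algebra_simps add_divide_distrib)
    finally show ?case .
  qed
  have tail: "emeasure M {\<omega> \<in> space M. \<epsilon> < \<bar>S n \<omega>\<bar>} \<le> ennreal (2 * exp (- 2 * \<epsilon>^2 / real n))"
    if n: "n \<in> {1..T}" and e: "0 < \<epsilon>" for n \<epsilon>
  proof -
    define l where "l = 4 * \<epsilon> / real n"
    have l0: "0 < l" using n e by (simp add: l_def)
    have Sm[measurable]: "S n \<in> borel_measurable M" using SM n by auto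
    define u where "u = (\<lambda>\<omega>. ennreal (exp (l * S n \<omega>)) + ennreal (exp (- l * S n \<omega>)))"
    have um: "u \<in> borel_measurable M" unfolding u_def by measurable
    have sub: "{\<omega> \<in> space M. \<epsilon> < \<bar>S n \<omega>\<bar>} \<subseteq> {\<omega> \<in> space M. 1 \<le> ennreal (exp (- l * \<epsilon>)) * u \<omega>}"
    proof safe
      fix \<omega> assume "\<omega> \<in> space M" "\<epsilon> < \<bar>S n \<omega>\<bar>"
      then have "l * \<epsilon> \<le> l * \<bar>S n \<omega>\<bar>" using l0 by simp
      then have "exp (l * \<epsilon>) \<le> exp (l * \<bar>S n \<omega>\<bar>)" by simp
      also have "exp (l * \<bar>S n \<omega>\<bar>) \<le> exp (l * S n \<omega>) + exp (- l * S n \<omega>)"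
        by (cases "0 \<le> S n \<omega>") (auto simp: add_increasing add_increasing2)
      finally have "1 \<le> exp (- l * \<epsilon>) * (exp (l * S n \<omega>) + exp (- l * S n \<omega>))"
        by (simp add: exp_minus field_simps)
      then show "1 \<le> ennreal (exp (- l * \<epsilon>)) * u \<omega>"
        unfolding u_def by (simp add: ennreal_mult[symmetric] ennreal_plus[symmetric] del: ennreal_plus)
    qed
    have "emeasure M {\<omega> \<in> space M. \<epsilon> < \<bar>S n \<omega>\<bar>} \<le> emeasure M {\<omega> \<in> space M. 1 \<le> ennreal (exp (- l * \<epsilon>)) * u \<omega>}"
      by (rule emeasure_mono[OF sub]) (use um in measurable)
    also have "\<dots> \<le> ennreal (exp (- l * \<epsilon>)) * (\<integral>\<^sup>+\<omega>. u \<omega> * indicator (space M) \<omega> \<partial>M)"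
      by (rule nn_integral_Markov_inequality) (use um in auto)
    also have "(\<integral>\<^sup>+\<omega>. u \<omega> * indicator (space M) \<omega> \<partial>M) = (\<integral>\<^sup>+\<omega>. u \<omega> \<partial>M)"
      by (intro nn_integral_cong) auto
    also have "\<dots> = (\<integral>\<^sup>+\<omega>. ennreal (exp (l * S n \<omega>)) \<partial>M) + (\<integral>\<^sup>+\<omega>. ennreal (exp ((- l) * S n \<omega>)) \<partial>M)"
      unfolding u_def by (rule nn_integral_add) auto
    also have "\<dots> \<le> ennreal (exp (real n * l^2 / 8)) + ennreal (exp (real n * (- l)^2 / 8))"
      using n by (intro add_mono mgf) auto
    also have "ennreal (exp (- l * \<epsilon>)) * (ennreal (exp (real n * l^2 / 8)) + ennreal (exp (real n * (- l)^2 / 8)))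
        = ennreal (2 * exp (real n * l^2 / 8 - l * \<epsilon>))"
    proof -
      define a where "a = real n * l^2 / 8"
      have r: "exp (- l * \<epsilon>) * (exp a + exp a) = 2 * exp (a - l * \<epsilon>)"
      proof -
        have "exp (a - l * \<epsilon>) = exp a * exp (- l * \<epsilon>)" by (simp add: exp_add[symmetric])
        then show ?thesis by simp
      qed
      have "ennreal (exp (- l * \<epsilon>)) * (ennreal (exp a) + ennreal (exp a)) = ennreal (exp (- l * \<epsilon>) * (exp a + exp a))"
        by (simp add: ennreal_mult[symmetric] ennreal_plus[symmetric] del: ennreal_plus)
      also have "\<dots> = ennreal (2 * exp (a - l * \<epsilon>))" by (simp only: r)
      finally show ?thesis unfolding power2_minus a_def .
    qed
    also have "real n * l^2 / 8 - l * \<epsilon> = - 2 * \<epsilon>^2 / real n"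
      using n by (simp add: l_def field_simps power2_eq_square)
    finally show ?thesis by (simp add: mult_left_mono)
  qed
  define L where "L = ln (2 * real T / \<delta>)"
  have L1: "1 < 2 * real T / \<delta>" using T2 delta by (simp add: field_simps)
  have L0: "0 < L" unfolding L_def using L1 by simp
  define eps where "eps = (\<lambda>t::nat. sqrt (2 * real (t - 1) * L))"
  define K where "K = (\<lambda>t \<omega>. \<Sum>s = 1..<t. integral {0..b s \<omega>} G)"
  have Keq: "(\<Sum>s = 1..<t. integral {0..b s \<omega>} G) = K t \<omega>" for t \<omega> by (simp add: K_def)
  define Bad where "Bad = (\<lambda>t. {\<omega> \<in> space M. eps t < \<bar>S (t - 1) \<omega>\<bar>})"
  have Bad_sets: "Bad t \<in> sets M" if "t \<in> {2..T}" for t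
  proof -
    have [measurable]: "S (t - 1) \<in> borel_measurable M" using SM that by auto
    show ?thesis unfolding Bad_def by measurable
  qed
  have Bad_le: "measure M (Bad t) \<le> \<delta> / real T" if t: "t \<in> {2..T}" for t
  proof -
    have e: "0 < eps t" using t L0 by (simp add: eps_def)
    have "emeasure M (Bad t) \<le> ennreal (2 * exp (- 2 * (eps t)^2 / real (t - 1)))"
      unfolding Bad_def by (rule tail) (use t e in auto)
    also have "- 2 * (eps t)^2 / real (t - 1) = - 4 * L"
    proof -
      have "real t - 1 > 0" using t by simp
      then show ?thesis using t L0 by (simp add: eps_def field_simps of_nat_diff)
    qed
    finally have "measure M (Bad t) \<le> 2 * exp (- 4 * L)"
      by (simp add: P.emeasure_eq_measure)
    also have "2 * exp (- 4 * L) \<le> 2 * exp (- L)" using L0 by simp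
    also have "exp (- L) = \<delta> / (2 * real T)"
      unfolding L_def using L1 delta T2 by (simp add: exp_minus)
    finally show ?thesis by simp
  qed
  have det: "\<bar>atil t \<omega> - \<alpha>0\<bar> \<le> 2 * eps t / K t \<omega>"
    if t: "t \<in> {2..T}" and \<omega>: "\<omega> \<in> space M" and nb: "\<omega> \<notin> Bad t" and Kp: "0 < K t \<omega>" for t \<omega>
  proof -
    define A where "A = (\<lambda>\<alpha>. \<Sum>s = 1..<t. reward \<alpha>0 (v s \<omega>) (b s \<omega>) (d s \<omega>) - rfun G (v s \<omega>) (b s \<omega>) \<alpha>)"
    have lin: "A \<alpha> = A \<alpha>0 + (\<alpha>0 - \<alpha>) * K t \<omega>" for \<alpha>
      unfolding A_def K_def sum_distrib_left sum.distrib[symmetric]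
      by (intro sum.cong) (auto simp: rfun_def algebra_simps)
    have SA: "S (t - 1) \<omega> = A \<alpha>0"
      using t unfolding S_def A_def Z_def by (simp add: Suc_diff_1)
    have h1: "\<bar>A \<alpha>0\<bar> \<le> eps t" using nb \<omega> SA unfolding Bad_def by auto
    have h2: "\<bar>A (atil t \<omega>)\<bar> \<le> \<bar>A \<alpha>0\<bar>" using atil_argmin[OF t \<omega>] alpha0 unfolding A_def by blast
    have "\<bar>atil t \<omega> - \<alpha>0\<bar> * K t \<omega> = \<bar>A (atil t \<omega>) - A \<alpha>0\<bar>"
      using lin[of "atil t \<omega>"] Kp by (simp add: abs_mult abs_minus_commute)
    also have "\<dots> \<le> 2 * eps t" using h1 h2 by linarith
    finally show ?thesis using Kp by (simp add: pos_le_divide_eq)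
  qed
  have atilM: "atil t \<in> borel_measurable M" if t: "t \<in> {2..T}" for t
  proof (rule gen_sigma_meas[OF _ refl atil_adapted[OF t]])
    fix Y assume "Y \<in> (\<Union>r\<in>{1..<t}. {v r, (\<lambda>\<omega>. win (b r \<omega>) (d r \<omega>)), (\<lambda>\<omega>. cost \<alpha>0 (b r \<omega>) (d r \<omega>))})"
    then obtain r where r: "r \<in> {1..<t}" and "Y = v r \<or> Y = (\<lambda>\<omega>. win (b r \<omega>) (d r \<omega>)) \<or> Y = (\<lambda>\<omega>. cost \<alpha>0 (b r \<omega>) (d r \<omega>))"
      by blast
    moreover have [measurable]: "b r \<in> borel_measurable M" "v r \<in> borel_measurable M" "d r \<in> borel_measurable M"
      using r t bM vM dM by auto
    ultimately show "Y \<in> borel_measurable M" unfolding win_def cost_def by auto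
  qed
  have KM: "K t \<in> borel_measurable M" if t: "t \<in> {2..T}" for t
    unfolding K_def
  proof (intro borel_measurable_sum)
    fix s assume "s \<in> {1..<t}"
    then have [measurable]: "b s \<in> borel_measurable M" using t bM by auto
    show "(\<lambda>\<omega>. integral {0..b s \<omega>} G) \<in> borel_measurable M" by measurable
  qed
  let ?Good = "{\<omega> \<in> space M. \<forall>t\<in>{2..T}. K t \<omega> > 0 \<longrightarrow>
            \<bar>atil t \<omega> - \<alpha>0\<bar> \<le> 2 * sqrt (2 * real (t - 1) * ln (2 * real T / \<delta>)) / K t \<omega>}"
  have Good_sets: "?Good \<in> sets M"
  proof (rule sets.sets_Collect_finite_All)
    fix t assume t: "t \<in> {2..T}"
    have [measurable]: "atil t \<in> borel_measurable M" "K t \<in> borel_measurable M" using atilM KM t by auto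
    show "{\<omega> \<in> space M. K t \<omega> > 0 \<longrightarrow>
            \<bar>atil t \<omega> - \<alpha>0\<bar> \<le> 2 * sqrt (2 * real (t - 1) * ln (2 * real T / \<delta>)) / K t \<omega>} \<in> sets M"
      by measurable
  qed simp
  have sub: "space M - (\<Union>t\<in>{2..T}. Bad t) \<subseteq> ?Good"
    using det unfolding eps_def L_def by auto
  have UB: "(\<Union>t\<in>{2..T}. Bad t) \<in> sets M" using Bad_sets by auto
  have "1 - \<delta> \<le> 1 - (\<Sum>t\<in>{2..T}. measure M (Bad t))"
  proof -
    have "(\<Sum>t\<in>{2..T}. measure M (Bad t)) \<le> real (card {2..T}) * (\<delta> / real T)"
      using Bad_le by (rule sum_bounded_above)
    also have "\<dots> \<le> real T * (\<delta> / real T)" using delta by (intro mult_right_mono) auto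
    also have "\<dots> = \<delta>" using T2 by simp
    finally show ?thesis by simp
  qed
  also have "\<dots> \<le> 1 - measure M (\<Union>t\<in>{2..T}. Bad t)"
  proof -
    have "Bad ` {2..T} \<subseteq> sets M" using Bad_sets by auto
    then show ?thesis using P.finite_measure_subadditive_finite[of "{2..T}" Bad] by simp
  qed
  also have "\<dots> = measure M (space M - (\<Union>t\<in>{2..T}. Bad t))"
    using P.prob_compl[OF UB] by simp
  also have "\<dots> \<le> measure M ?Good"
    by (rule P.finite_measure_mono[OF sub Good_sets])
  finally show ?thesis unfolding Keq .
  qed
qed

end
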